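(* Let $d,n$ be positive integers and let $\mathcal D$ be a Ferrers diagram of order $n$ with $\mathcal D\cap\{d-1,\dots,n\}^2\ne\emptyset$, such that $(\mathcal D,d)$ is in $(a,b)$-standard form. Then for all $i\in\{1,\dots,d-1\}$, $$\nu_i(\mathcal D,d)-\nu_{i-1}(\mathcal D,d)=b-a+d-2i+c_{d-i}(X)-c_i(Y),$$ and consequently, for all $j\in\{1,\dots,d-1\}$, $$\nu_j(\mathcal D,d)-\nu_0(\mathcal D,d)=j(b-a+d-1-j)+\sum_{i=1}^{j}c_{d-i}(X)-\sum_{i=1}^{j}c_i(Y).$$
   Context: A Ferrers diagram is a finite $\mathcal D\subseteq\{1,2,\dots\}^2$ such that $(x,y)\in\mathcal D$ implies $(i,j)\in\mathcal D$ for all $1\le i\le x$, $1\le j\le y$ (first coordinate = row, second = column); order $n$ means $\mathcal D\subseteq\{1,\dots,n\}^2$. For $0\le j\le d-1$, $\nu_j(\mathcal D,d)$ is the number of $(x,y)\in\mathcal D$ with $x\ge d-j$ and $y\ge j+1$ (equivalently $\sum_{i\ge j+1}\max\{0,c_i-d+j\}$ with $c_i$ the column heights). For integers $a,b\ge d-1$, $(\mathcal D,d)$ is in $(a,b)$-standard form if $\mathcal D\cap\{d-1,\dots,n\}^2=\{d-1,\dots,a\}\times\{d-1,\dots,b\}$. In that case, for $i\in\{1,\dots,d-2\}$, $c_i(X)=|\{y>b:(i,y)\in\mathcal D\}|$ and $c_i(Y)=|\{x>a:(x,i)\in\mathcal D\}|$, and by convention $c_{d-1}(X)=c_{d-1}(Y)=0$.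 *)

theory Defs
  imports Main
begin

(* Ferrers diagram: finite, contained in positive coordinates, downward closed.
   First coordinate = row, second = column. *)
definition ferrers :: "(nat \<times> nat) set \<Rightarrow> bool" where
  "ferrers D \<longleftrightarrow> finite D \<and> (\<forall>(x,y)\<in>D. x \<ge> 1 \<and> y \<ge> 1) \<and>
     (\<forall>x y i j. (x,y) \<in> D \<and> 1 \<le> i \<and> i \<le> x \<and> 1 \<le> j \<and> j \<le> y \<longrightarrow> (i,j) \<in> D)"

definition ferrers_of_order :: "(nat \<times> nat) set \<Rightarrow> nat \<Rightarrow> bool" where
  "ferrers_of_order D n \<longleftrightarrow> ferrers D \<and> D \<subseteq> {1..n} \<times> {1..n}"

(* nu_j(D,d), meaningful for 0 \<le> j \<le> d-1 *)
definition nu :: "(nat \<times> nat) set \<Rightarrow> nat \<Rightarrow> nat \<Rightarrow> nat" where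
  "nu D d j = card {(x,y) \<in> D. x \<ge> d - j \<and> y \<ge> j + 1}"

definition standard_form :: "(nat \<times> nat) set \<Rightarrow> nat \<Rightarrow> nat \<Rightarrow> nat \<Rightarrow> nat \<Rightarrow> bool" where
  "standard_form D n d a b \<longleftrightarrow> a \<ge> d - 1 \<and> b \<ge> d - 1 \<and>
     D \<inter> ({d-1..n} \<times> {d-1..n}) = {d-1..a} \<times> {d-1..b}"

definition cX :: "(nat \<times> nat) set \<Rightarrow> nat \<Rightarrow> nat \<Rightarrow> nat \<Rightarrow> nat" where
  "cX D d b i = (if i = d - 1 then 0 else card {y. y > b \<and> (i,y) \<in> D})"

definition cY :: "(nat \<times> nat) set \<Rightarrow> nat \<Rightarrow> nat \<Rightarrow> nat \<Rightarrow> nat" where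
  "cY D d a i = (if i = d - 1 then 0 else card {x. x > a \<and> (x,i) \<in> D})"

end

theory Submission
  imports Defs
begin

lemma step_lemma:
  fixes D :: "(nat \<times> nat) set" and d n a b i :: nat
  assumes fo: "ferrers_of_order D n"
    and sf: "standard_form D n d a b"
    and i1: "1 \<le> i" and i2: "i \<le> d - 1"
  shows "int (nu D d i) - int (nu D d (i - 1)) =
            int b - int a + int d - 2 * int i + int (cX D d b (d - i)) - int (cY D d a i)"
proof -
  have fin: "finite D" and pos: "\<And>x y. (x,y) \<in> D \<Longrightarrow> x \<ge> 1 \<and> y \<ge> 1"
    and cl: "\<And>x y i j. (x,y) \<in> D \<Longrightarrow> 1 \<le> i \<Longrightarrow> i \<le> x \<Longrightarrow> 1 \<le> j \<Longrightarrow> j \<le> y \<Longrightarrow> (i,j) \<in> D"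
    and sub: "D \<subseteq> {1..n} \<times> {1..n}"
    using fo unfolding ferrers_of_order_def ferrers_def by blast+
  have ad: "a \<ge> d - 1" and bd: "b \<ge> d - 1"
    and box: "D \<inter> ({d-1..n} \<times> {d-1..n}) = {d-1..a} \<times> {d-1..b}"
    using sf unfolding standard_form_def by auto
  have boxD: "{d-1..a} \<times> {d-1..b} \<subseteq> D" using box by blast
  have abD: "(a,b) \<in> D" using boxD ad bd by auto
  have an: "a \<le> n" and bn: "b \<le> n" using abD sub by auto
  define r where "r = d - i"
  have r1: "1 \<le> r" and r2: "r \<le> d - 1" and ri: "d - (i - 1) = r + 1" and rd: "d - i = r"
    using i1 i2 unfolding r_def by auto
  define A1 where "A1 = {(x,y) \<in> D. x \<ge> d - i \<and> y \<ge> i + 1}"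
  define A0 where "A0 = {(x,y) \<in> D. x \<ge> d - (i - 1) \<and> y \<ge> i - 1 + 1}"
  define SR where "SR = {y. (r,y) \<in> D \<and> y \<ge> i + 1}"
  define SC where "SC = {x. (x,i) \<in> D \<and> x \<ge> r + 1}"
  define TX where "TX = {y. y > b \<and> (r,y) \<in> D}"
  define TY where "TY = {x. x > a \<and> (x,i) \<in> D}"
  have finTX: "finite TX" by (rule finite_subset[of _ "{..n}"]) (use sub in \<open>auto simp: TX_def\<close>)
  have finTY: "finite TY" by (rule finite_subset[of _ "{..n}"]) (use sub in \<open>auto simp: TY_def\<close>)
  have nuA1: "nu D d i = card A1" unfolding nu_def A1_def by simp
  have nuA0: "nu D d (i - 1) = card A0" unfolding nu_def A0_def by simp
  have eq: "A1 \<union> (\<lambda>x. (x,i)) ` SC = A0 \<union> Pair r ` SR"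
    unfolding A1_def A0_def SC_def SR_def ri rd using i1 by (auto simp: image_iff) (metis le_neq_implies_less Suc_leI)+
  have finA1: "finite A1" unfolding A1_def by (rule finite_subset[OF _ fin]) auto
  have finA0: "finite A0" unfolding A0_def by (rule finite_subset[OF _ fin]) auto
  have SRe: "SR = {i+1..b} \<union> TX"
  proof
    show "SR \<subseteq> {i+1..b} \<union> TX" unfolding SR_def TX_def by auto
    show "{i+1..b} \<union> TX \<subseteq> SR" unfolding SR_def TX_def
      using cl[OF abD, of r] r1 r2 ad bd i1 i2 by auto
  qed
  have SCe: "SC = {r+1..a} \<union> TY"
  proof
    show "SC \<subseteq> {r+1..a} \<union> TY" unfolding SC_def TY_def by auto
    show "{r+1..a} \<union> TY \<subseteq> SC" unfolding SC_def TY_def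
      using cl[OF abD, of _ i] i1 i2 bd ad r1 r2 by auto
  qed
  have finSR: "finite SR" using SRe finTX by simp
  have finSC: "finite SC" using SCe finTY by simp
  have cSR: "card SR = (b - i) + card TX"
    unfolding SRe by (subst card_Un_disjoint[OF _ finTX]) (auto simp: TX_def)
  have cSC: "card SC = (a - r) + card TY"
    unfolding SCe by (subst card_Un_disjoint[OF _ finTY]) (auto simp: TY_def)
  have c1: "card (A1 \<union> (\<lambda>x. (x,i)) ` SC) = card A1 + card SC"
    by (subst card_Un_disjoint[OF finA1]) (use finSC in \<open>auto simp: A1_def card_image inj_on_def\<close>)
  have c0: "card (A0 \<union> Pair r ` SR) = card A0 + card SR"
    using r1 ri by (subst card_Un_disjoint[OF finA0]) (use finSR in \<open>auto simp: A0_def card_image inj_on_def\<close>)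
  have cx: "cX D d b r = card TX"
  proof (cases "r = d - 1")
    case True
    have "TX = {}"
    proof (rule ccontr)
      assume "TX \<noteq> {}"
      then obtain y where y: "y > b" "(r,y) \<in> D" unfolding TX_def by auto
      then have "(r,y) \<in> D \<inter> ({d-1..n} \<times> {d-1..n})" using True sub bd by auto
      then have "(r,y) \<in> {d-1..a} \<times> {d-1..b}" unfolding box .
      then show False using y by auto
    qed
    then show ?thesis using True unfolding cX_def by simp
  next
    case False then show ?thesis unfolding cX_def TX_def by simp
  qed
  have cy: "cY D d a i = card TY"
  proof (cases "i = d - 1")
    case True
    have "TY = {}"
    proof (rule ccontr)
      assume "TY \<noteq> {}"
      then obtain x where x: "x > a" "(x,i) \<in> D" unfolding TY_def by auto
      then have "(x,i) \<in> D \<inter> ({d-1..n} \<times> {d-1..n})" using True sub ad by auto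
      then have "(x,i) \<in> {d-1..a} \<times> {d-1..b}" unfolding box .
      then show False using x by auto
    qed
    then show ?thesis using True unfolding cY_def by simp
  next
    case False then show ?thesis unfolding cY_def TY_def by simp
  qed
  have "card A1 + card SC = card A0 + card SR" using eq c1 c0 by simp
  then have "int (card A1) + int (a - r) + int (card TY) = int (card A0) + int (b - i) + int (card TX)"
    using cSR cSC by simp
  moreover have "int (a - r) = int a - int r" using ad r2 by simp
  moreover have "int (b - i) = int b - int i" using bd i2 by simp
  moreover have "int r = int d - int i" using r_def i2 by simp
  ultimately show ?thesis using nuA1 nuA0 cx cy rd by simp
qed

theorem proposition4p11:
  fixes D :: "(nat \<times> nat) set" and d n a b :: nat
  assumes "d \<ge> 1" and "n \<ge> 1"
    and "ferrers_of_order D n"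
    and "D \<inter> ({d-1..n} \<times> {d-1..n}) \<noteq> {}"
    and "standard_form D n d a b"
  shows "(\<forall>i\<in>{1..d-1}. int (nu D d i) - int (nu D d (i - 1)) =
            int b - int a + int d - 2 * int i + int (cX D d b (d - i)) - int (cY D d a i))
       \<and> (\<forall>j\<in>{1..d-1}. int (nu D d j) - int (nu D d 0) =
            int j * (int b - int a + int d - 1 - int j)
            + (\<Sum>i=1..j. int (cX D d b (d - i))) - (\<Sum>i=1..j. int (cY D d a i)))"
proof -
  have st: "\<And>i. i \<in> {1..d-1} \<Longrightarrow> int (nu D d i) - int (nu D d (i - 1)) =
            int b - int a + int d - 2 * int i + int (cX D d b (d - i)) - int (cY D d a i)"
    using step_lemma[OF assms(3) assms(5)] by auto
  have ind: "j \<le> d - 1 \<Longrightarrow> int (nu D d j) - int (nu D d 0) =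
            int j * (int b - int a + int d - 1 - int j)
            + (\<Sum>i=1..j. int (cX D d b (d - i))) - (\<Sum>i=1..j. int (cY D d a i))" for j
  proof (induction j)
    case 0 then show ?case by simp
  next
    case (Suc j)
    have s: "int (nu D d (Suc j)) - int (nu D d j) =
            int b - int a + int d - 2 * int (Suc j) + int (cX D d b (d - Suc j)) - int (cY D d a (Suc j))"
      using st[of "Suc j"] Suc.prems by simp
    have ih: "int (nu D d j) - int (nu D d 0) =
            int j * (int b - int a + int d - 1 - int j)
            + (\<Sum>i=1..j. int (cX D d b (d - i))) - (\<Sum>i=1..j. int (cY D d a i))"
      using Suc by simp
    show ?case using s ih by (simp add: algebra_simps)
  qed
  show ?thesis using st ind by auto
qed

end
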